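(* Let $P(X_1,\ldots,X_n)$ be a polynomial over $\mathbb{C}$ which is symmetric in $X_1,\ldots,X_n$. Then $$P(E_{k_1},\ldots,E_{k_n})\prod_{1\le i<j\le n}\frac{k_j-k_i}{j-i}=P(1,\ldots,1)\cdot\prod_{1\le i<j\le n}\frac{k_j-k_i}{j-i}.$$
   Context: $E_{k_j}$ denotes the shift operator in the variable $k_j$ acting on $\mathbb{C}[k_1,\ldots,k_n]$, $E_{k_j}F(\ldots,k_j,\ldots)=F(\ldots,k_j+1,\ldots)$; since these commute, $P(E_{k_1},\ldots,E_{k_n})$ is a well-defined operator (products are compositions, and $1$ corresponds to the identity). *)

theory Defs
  imports "HOL-Combinatorics.Permutations" Complex_Main
begin

text \<open>A polynomial in the n variables X_0,...,X_(n-1) over the complex numbers is represented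
by its coefficient function on exponent vectors: c alpha is the coefficient of the monomial
prod_i X_i^(alpha i).\<close>

definition is_poly :: "nat \<Rightarrow> ((nat \<Rightarrow> nat) \<Rightarrow> complex) \<Rightarrow> bool" where
  "is_poly n c \<longleftrightarrow> finite {\<alpha>. c \<alpha> \<noteq> 0} \<and> (\<forall>\<alpha>. c \<alpha> \<noteq> 0 \<longrightarrow> (\<forall>i\<ge>n. \<alpha> i = 0))"

definition is_symmetric_poly :: "nat \<Rightarrow> ((nat \<Rightarrow> nat) \<Rightarrow> complex) \<Rightarrow> bool" where
  "is_symmetric_poly n c \<longleftrightarrow> is_poly n c \<and>
     (\<forall>\<sigma>. \<sigma> permutes {..<n} \<longrightarrow> (\<forall>\<alpha>. c (\<alpha> \<circ> \<sigma>) = c \<alpha>))"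

definition poly_eval :: "((nat \<Rightarrow> nat) \<Rightarrow> complex) \<Rightarrow> (nat \<Rightarrow> complex) \<Rightarrow> complex" where
  "poly_eval c x = (\<Sum>\<alpha>\<in>{\<alpha>. c \<alpha> \<noteq> 0}. c \<alpha> * (\<Prod>i\<in>{i. \<alpha> i \<noteq> 0}. x i ^ \<alpha> i))"

text \<open>The operator P(E_{k_0},...,E_{k_(n-1)}) applied to a function F of k:
  the monomial prod E_{k_i}^(alpha i) sends F to k \<mapsto> F(k + alpha).\<close>
definition shift_op :: "((nat \<Rightarrow> nat) \<Rightarrow> complex) \<Rightarrow> ((nat \<Rightarrow> complex) \<Rightarrow> complex)
    \<Rightarrow> (nat \<Rightarrow> complex) \<Rightarrow> complex" where
  "shift_op c F k = (\<Sum>\<alpha>\<in>{\<alpha>. c \<alpha> \<noteq> 0}. c \<alpha> * F (\<lambda>i. k i + of_nat (\<alpha> i)))"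

definition vdm :: "nat \<Rightarrow> (nat \<Rightarrow> complex) \<Rightarrow> complex" where
  "vdm n k = (\<Prod>j\<in>{..<n}. \<Prod>i\<in>{..<j}. (k j - k i) / (of_nat j - of_nat i))"

end

theory Submission
  imports Defs "HOL-Computational_Algebra.Polynomial"
begin

lemma pperm: "p permutes {..<(n::nat)} \<Longrightarrow> permutation p"
  by (auto simp: permutation_permutes)

definition DD :: "nat \<Rightarrow> (nat \<Rightarrow> complex) \<Rightarrow> complex" where
"DD n x = (\<Sum>\<pi>\<in>{\<pi>. \<pi> permutes {..<n}}. of_int (sign \<pi>) * (\<Prod>j<n. x j ^ \<pi> j))"

lemma DD_alt:
  assumes "a < n" "b < n" "a \<noteq> b" "x a = x b"
  shows "DD n x = 0"
proof -
  let ?t = "transpose a b"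
  let ?P = "{\<pi>. \<pi> permutes {..<n}}"
  have t: "?t permutes {..<n}" using assms by (simp add: permutes_swap_id)
  have tt: "\<And>\<pi>. \<pi> \<circ> ?t \<circ> ?t = \<pi>" by (simp add: o_assoc[symmetric] fun_eq_iff)
  have "DD n x = (\<Sum>\<pi>\<in>?P. of_int (sign (\<pi> \<circ> ?t)) * (\<Prod>j<n. x j ^ (\<pi>\<circ>?t) j))"
    unfolding DD_def
    by (rule sum.reindex_bij_witness[where i="\<lambda>\<pi>. \<pi> \<circ> ?t" and j="\<lambda>\<pi>. \<pi> \<circ> ?t"])
       (auto simp: tt permutes_compose[OF t])
  also have "\<dots> = (\<Sum>\<pi>\<in>?P. - (of_int (sign \<pi>) * (\<Prod>j<n. x j ^ \<pi> j)))"
  proof (rule sum.cong[OF refl])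
    fix \<pi> assume "\<pi> \<in> ?P"
    hence p: "\<pi> permutes {..<n}" by simp
    have s: "sign (\<pi> \<circ> ?t) = - sign \<pi>"
      using sign_compose[OF pperm[OF p] pperm[OF t]]
      by (simp add: sign_swap_id assms)
    have "(\<Prod>j<n. x j ^ (\<pi>\<circ>?t) j) = (\<Prod>j<n. x (?t j) ^ \<pi> (?t j))"
      by (rule prod.cong[OF refl]) (use assms in \<open>auto simp: transpose_def\<close>)
    also have "\<dots> = (\<Prod>j<n. x j ^ \<pi> j)"
      using prod.permute[OF t, of "\<lambda>j. x j ^ \<pi> j"] by (simp add: o_def)
    finally show "of_int (sign (\<pi> \<circ> ?t)) * (\<Prod>j<n. x j ^ (\<pi>\<circ>?t) j) = - (of_int (sign \<pi>) * (\<Prod>j<n. x j ^ \<pi> j))"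
      by (simp add: s)
  qed
  also have "\<dots> = - DD n x" unfolding DD_def by (simp add: sum_negf)
  finally show ?thesis by simp
qed

lemma DD_0: "DD 0 x = 1"
  unfolding DD_def by (simp add: permutes_empty)

lemma DD_Suc_poly:
  fixes n :: nat and x :: "nat \<Rightarrow> complex"
  defines "a \<equiv> (\<lambda>b. \<Sum>q\<in>{q. q permutes {..<n}}. of_int (sign (transpose n b \<circ> q)) *
                  (\<Prod>j<n. x j ^ (transpose n b \<circ> q) j))"
  shows "DD (Suc n) (x(n := z)) = poly (\<Sum>b\<le>n. monom (a b) b) z"
proof -
  have ins: "{..<Suc n} = insert n {..<n}" by auto
  have "DD (Suc n) (x(n := z)) = (\<Sum>b\<in>insert n {..<n}. \<Sum>q\<in>{q. q permutes {..<n}}.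
     of_int (sign (transpose n b \<circ> q)) * (\<Prod>j\<in>insert n {..<n}. (x(n := z)) j ^ (transpose n b \<circ> q) j))"
    unfolding DD_def ins by (rule sum_over_permutations_insert) auto
  also have "\<dots> = (\<Sum>b\<le>n. a b * z ^ b)"
  proof -
    have "insert n {..<n} = {..n}" by auto
    moreover have "(\<Sum>q\<in>{q. q permutes {..<n}}.
     of_int (sign (transpose n b \<circ> q)) * (\<Prod>j\<in>insert n {..<n}. (x(n := z)) j ^ (transpose n b \<circ> q) j))
     = a b * z ^ b" for b
    proof -
      have "(\<Prod>j\<in>insert n {..<n}. (x(n := z)) j ^ (transpose n b \<circ> q) j) =
            z ^ b * (\<Prod>j<n. x j ^ (transpose n b \<circ> q) j)" if "q permutes {..<n}" for q
      proof -
        have "q n = n" using that by (simp add: permutes_def)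
        moreover have "(\<Prod>j<n. (x(n := z)) j ^ (transpose n b \<circ> q) j) = (\<Prod>j<n. x j ^ (transpose n b \<circ> q) j)"
          by (rule prod.cong) auto
        ultimately show ?thesis by simp
      qed
      then show ?thesis unfolding a_def sum_distrib_right
        by (intro sum.cong) (auto simp: mult_ac)
    qed
    ultimately show ?thesis by simp
  qed
  also have "\<dots> = poly (\<Sum>b\<le>n. monom (a b) b) z"
    by (simp add: poly_sum poly_monom)
  finally show ?thesis .
qed

lemma vandermonde: "DD n x = (\<Prod>j<n. \<Prod>i<j. x j - x i)"
proof (induction n arbitrary: x)
  case 0
  then show ?case by (simp add: DD_0)
next
  case (Suc n)
  show ?case
  proof (cases "inj_on x {..<n}")
    case False
    then obtain a b where ab: "a < n" "b < n" "a \<noteq> b" "x a = x b"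
      unfolding inj_on_def by auto
    have "DD (Suc n) x = 0" by (rule DD_alt[OF _ _ ab(3,4)]) (use ab in auto)
    moreover have "DD n x = 0" by (rule DD_alt[OF ab])
    ultimately show ?thesis using Suc.IH[of x] by simp
  next
    case True
    define a where "a \<equiv> (\<lambda>b. \<Sum>q\<in>{q. q permutes {..<n}}. of_int (sign (transpose n b \<circ> q)) *
                  (\<Prod>j<n. x j ^ (transpose n b \<circ> q) j))"
    define P where "P = (\<Sum>b\<le>n. monom (a b) b)"
    define Q where "Q = smult (DD n x) (\<Prod>i<n. [:- x i, 1:])"
    have PD: "poly P z = DD (Suc n) (x(n := z))" for z
      unfolding P_def a_def by (rule DD_Suc_poly[symmetric])
    have an: "a n = DD n x"
      unfolding a_def DD_def by simp
    have degP: "degree P \<le> n"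
      unfolding P_def by (intro degree_sum_le) (auto intro: order.trans[OF degree_monom_le])
    have coeffP: "coeff P n = a n"
      unfolding P_def by (simp add: coeff_sum coeff_monom)
    have degprod: "degree (\<Prod>i<n. [:- x i, (1::complex):]) = n"
      by (subst degree_prod_sum_eq) auto
    have lcprod: "lead_coeff (\<Prod>i<n. [:- x i, (1::complex):]) = 1"
      by (simp add: lead_coeff_prod)
    have degQ: "degree Q \<le> n" unfolding Q_def using degprod
      by (metis degree_smult_le)
    have coeffQ: "coeff Q n = DD n x" unfolding Q_def using lcprod degprod by simp
    have PQ: "P = Q"
    proof (rule poly_eqI_degree_lead_coeff[where A="x ` {..<n}" and n=n])
      show "coeff P n = coeff Q n" using coeffP coeffQ an by simp
      show "n \<le> card (x ` {..<n})" using card_image[OF True] by simp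
      show "degree P \<le> n" by (rule degP)
      show "degree Q \<le> n" by (rule degQ)
      fix z assume "z \<in> x ` {..<n}"
      then obtain i where i: "i < n" "z = x i" by auto
      have "poly P z = 0" unfolding PD
        by (rule DD_alt[of i "Suc n" n]) (use i in auto)
      moreover have "poly Q z = 0" unfolding Q_def using i
        by (auto simp: poly_prod)
      ultimately show "poly P z = poly Q z" by simp
    qed
    have "DD (Suc n) x = poly P (x n)" using PD[of "x n"] by simp
    also have "\<dots> = DD n x * (\<Prod>i<n. x n - x i)" unfolding PQ Q_def by (simp add: poly_prod)
    finally show ?thesis using Suc.IH[of x] by simp
  qed
qed

lemma binom_expand:
  fixes u v :: complex
  assumes "p < n"
  shows "(u + v) ^ p = (\<Sum>m<n. of_nat (p choose m) * v ^ (p - m) * u ^ m)"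
proof -
  have "(u + v) ^ p = (\<Sum>m\<le>p. of_nat (p choose m) * u ^ m * v ^ (p - m))"
    by (rule binomial_ring)
  also have "\<dots> = (\<Sum>m<n. of_nat (p choose m) * u ^ m * v ^ (p - m))"
    by (rule sum.mono_neutral_left) (use assms in auto)
  finally show ?thesis by (simp add: mult_ac)
qed

lemma sum_perm_nat:
  assumes "inj_on m {..<n}" "\<forall>j<n. m j < (n::nat)"
  shows "(\<Sum>j<n. m j) = (\<Sum>j<n. j)"
proof -
  have "m ` {..<n} = {..<n}"
    using assms by (intro card_subset_eq) (auto simp: card_image)
  then have "(\<Sum>j<n. j) = (\<Sum>j\<in>m ` {..<n}. j)" by simp
  also have "\<dots> = (\<Sum>j<n. m j)" by (subst sum.reindex[OF assms(1)]) auto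
  finally show ?thesis by simp
qed

lemma main_sum:
  fixes n :: nat and c :: "(nat \<Rightarrow> nat) \<Rightarrow> complex"
  assumes "is_symmetric_poly n c"
  shows "(\<Sum>\<alpha>\<in>{\<alpha>. c \<alpha> \<noteq> 0}. c \<alpha> * DD n (\<lambda>i. k i + of_nat (\<alpha> i)))
       = (\<Sum>\<alpha>\<in>{\<alpha>. c \<alpha> \<noteq> 0}. c \<alpha>) * DD n k"
proof -
  define S where "S = {\<alpha>. c \<alpha> \<noteq> 0}"
  define P where "P = {\<pi>. \<pi> permutes {..<n}}"
  define M where "M = PiE {..<n} (\<lambda>_. {..<n})"
  define A where "A = (\<lambda>\<alpha> \<pi> m. \<Prod>j<n. of_nat (\<pi> j choose m j) * (of_nat (\<alpha> j) :: complex) ^ (\<pi> j - m j))"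
  define K where "K = (\<lambda>m. \<Prod>j<n. k j ^ m j)"
  define H where "H = (\<lambda>m \<alpha> \<pi>. c \<alpha> * of_int (sign \<pi>) * A \<alpha> \<pi> m * K m)"
  have finS: "finite S" using assms unfolding S_def is_symmetric_poly_def is_poly_def by auto
  have finP: "finite P" unfolding P_def by (rule finite_permutations) auto
  have finM: "finite M" unfolding M_def by (rule finite_PiE) auto
  have symc: "\<And>\<sigma> \<alpha>. \<sigma> permutes {..<n} \<Longrightarrow> c (\<alpha> \<circ> \<sigma>) = c \<alpha>"
    using assms unfolding is_symmetric_poly_def by auto
  have pn: "\<pi> j < n" if "\<pi> \<in> P" "j < n" for \<pi> j
    using that unfolding P_def using permutes_in_image[of \<pi> "{..<n}" j] by simp
  have step1: "(\<Prod>j<n. (k j + of_nat (\<alpha> j)) ^ \<pi> j) = (\<Sum>m\<in>M. A \<alpha> \<pi> m * K m)"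
    if "\<pi> \<in> P" for \<alpha> \<pi>
  proof -
    have "(\<Prod>j<n. (k j + of_nat (\<alpha> j)) ^ \<pi> j)
        = (\<Prod>j<n. \<Sum>m<n. of_nat (\<pi> j choose m) * (of_nat (\<alpha> j) :: complex) ^ (\<pi> j - m) * k j ^ m)"
      by (rule prod.cong[OF refl], rule binom_expand) (use pn that in auto)
    also have "\<dots> = (\<Sum>m\<in>M. \<Prod>j<n. of_nat (\<pi> j choose m j) * (of_nat (\<alpha> j) :: complex) ^ (\<pi> j - m j) * k j ^ m j)"
      unfolding M_def by (rule prod_sum_PiE) auto
    also have "\<dots> = (\<Sum>m\<in>M. A \<alpha> \<pi> m * K m)"
      unfolding A_def K_def by (simp add: prod.distrib)
    finally show ?thesis .
  qed
  have "(\<Sum>\<alpha>\<in>S. c \<alpha> * DD n (\<lambda>i. k i + of_nat (\<alpha> i)))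
      = (\<Sum>\<alpha>\<in>S. \<Sum>\<pi>\<in>P. \<Sum>m\<in>M. H m \<alpha> \<pi>)"
    unfolding DD_def P_def[symmetric] H_def
    by (intro sum.cong refl) (simp add: step1 sum_distrib_left mult_ac)
  also have "\<dots> = (\<Sum>m\<in>M. \<Sum>\<alpha>\<in>S. \<Sum>\<pi>\<in>P. H m \<alpha> \<pi>)"
    by (simp add: sum.swap[where A=M])
  also have "\<dots> = (\<Sum>m\<in>M. \<Sum>\<alpha>\<in>S. \<Sum>\<pi>\<in>P. if (\<forall>j<n. \<pi> j = m j) then c \<alpha> * of_int (sign \<pi>) * K m else 0)"
  proof (rule sum.cong[OF refl])
    fix m assume mM: "m \<in> M"
    hence mn: "\<forall>j<n. m j < n" unfolding M_def by auto
    show "(\<Sum>\<alpha>\<in>S. \<Sum>\<pi>\<in>P. H m \<alpha> \<pi>) = (\<Sum>\<alpha>\<in>S. \<Sum>\<pi>\<in>P. if (\<forall>j<n. \<pi> j = m j) then c \<alpha> * of_int (sign \<pi>) * K m else 0)"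
    proof (cases "inj_on m {..<n}")
      case True
      show ?thesis
      proof (intro sum.cong refl)
        fix \<alpha> \<pi> assume "\<alpha> \<in> S" "\<pi> \<in> P"
        show "H m \<alpha> \<pi> = (if (\<forall>j<n. \<pi> j = m j) then c \<alpha> * of_int (sign \<pi>) * K m else 0)"
        proof (cases "\<forall>j<n. \<pi> j = m j")
          case True
          then have "A \<alpha> \<pi> m = 1" unfolding A_def by simp
          then show ?thesis using True by (simp add: H_def)
        next
          case False
          have "\<exists>j<n. \<pi> j < m j"
          proof (rule ccontr)
            assume "\<not> (\<exists>j<n. \<pi> j < m j)"
            hence le: "\<forall>j<n. m j \<le> \<pi> j" by auto
            from False obtain j0 where j0: "j0 < n" "\<pi> j0 \<noteq> m j0" by auto
            have "(\<Sum>j<n. m j) < (\<Sum>j<n. \<pi> j)"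
              by (rule sum_strict_mono_ex1) (use le j0 in \<open>auto intro!: bexI[of _ j0]\<close>)
            moreover have "(\<Sum>j<n. m j) = (\<Sum>j<n. j)" by (rule sum_perm_nat[OF \<open>inj_on m {..<n}\<close> mn])
            moreover have "(\<Sum>j<n. \<pi> j) = (\<Sum>j<n. j)"
              by (rule sum_perm_nat) (use \<open>\<pi> \<in> P\<close> pn in \<open>auto simp: P_def intro: permutes_inj_on\<close>)
            ultimately show False by simp
          qed
          then obtain j where "j < n" "\<pi> j < m j" by auto
          then have "A \<alpha> \<pi> m = 0" unfolding A_def
            by (intro prod_zero) (auto intro!: bexI[of _ j])
          then show ?thesis using False by (auto simp: H_def)
        qed
      qed
    next
      case False
      then obtain a b where ab: "a < n" "b < n" "a \<noteq> b" "m a = m b"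
        unfolding inj_on_def by auto
      have rhs: "(\<Sum>\<alpha>\<in>S. \<Sum>\<pi>\<in>P. if (\<forall>j<n. \<pi> j = m j) then c \<alpha> * of_int (sign \<pi>) * K m else 0) = 0"
      proof (intro sum.neutral ballI)
        fix \<alpha> \<pi> assume "\<pi> \<in> P"
        then have "inj_on \<pi> {..<n}" unfolding P_def by (auto intro: permutes_inj_on)
        then have "\<not> (\<forall>j<n. \<pi> j = m j)" using ab unfolding inj_on_def by (metis lessThan_iff)
        then show "(if (\<forall>j<n. \<pi> j = m j) then c \<alpha> * of_int (sign \<pi>) * K m else 0) = 0" by auto
      qed
      let ?t = "transpose a b"
      have t: "?t permutes {..<n}" using ab by (simp add: permutes_swap_id)
      have tt: "\<And>\<pi>. \<pi> \<circ> ?t \<circ> ?t = \<pi>" by (simp add: o_assoc[symmetric] fun_eq_iff)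
      have "(\<Sum>\<alpha>\<in>S. \<Sum>\<pi>\<in>P. H m \<alpha> \<pi>) = (\<Sum>(\<alpha>,\<pi>)\<in>S \<times> P. H m \<alpha> \<pi>)"
        by (simp add: sum.cartesian_product)
      also have "\<dots> = (\<Sum>(\<alpha>,\<pi>)\<in>S \<times> P. H m (\<alpha> \<circ> ?t) (\<pi> \<circ> ?t))"
        by (rule sum.reindex_bij_witness[where i="\<lambda>(\<alpha>,\<pi>). (\<alpha> \<circ> ?t, \<pi> \<circ> ?t)" and j="\<lambda>(\<alpha>,\<pi>). (\<alpha> \<circ> ?t, \<pi> \<circ> ?t)"])
           (auto simp: tt P_def S_def permutes_compose[OF t] symc[OF t])
      also have "\<dots> = (\<Sum>(\<alpha>,\<pi>)\<in>S \<times> P. - H m \<alpha> \<pi>)"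
      proof (rule sum.cong[OF refl], clarify)
        fix \<alpha> \<pi> assume "\<alpha> \<in> S" "\<pi> \<in> P"
        hence p: "\<pi> permutes {..<n}" by (simp add: P_def)
        have s: "sign (\<pi> \<circ> ?t) = - sign \<pi>"
          using sign_compose[OF pperm[OF p] pperm[OF t]]
          by (simp add: sign_swap_id ab)
        have "A (\<alpha> \<circ> ?t) (\<pi> \<circ> ?t) m = (\<Prod>j<n. (\<lambda>j. of_nat (\<pi> j choose m j) * (of_nat (\<alpha> j) :: complex) ^ (\<pi> j - m j)) (?t j))"
          unfolding A_def
          by (rule prod.cong[OF refl]) (use ab in \<open>auto simp: transpose_def\<close>)
        also have "\<dots> = A \<alpha> \<pi> m"
          unfolding A_def using prod.permute[OF t, of "\<lambda>j. of_nat (\<pi> j choose m j) * (of_nat (\<alpha> j) :: complex) ^ (\<pi> j - m j)"]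
          by (simp add: o_def)
        finally show "H m (\<alpha> \<circ> ?t) (\<pi> \<circ> ?t) = - H m \<alpha> \<pi>"
          unfolding H_def by (simp add: s symc[OF t])
      qed
      also have "\<dots> = - (\<Sum>(\<alpha>,\<pi>)\<in>S \<times> P. H m \<alpha> \<pi>)"
        by (simp add: sum_negf case_prod_beta)
      finally have "(\<Sum>\<alpha>\<in>S. \<Sum>\<pi>\<in>P. H m \<alpha> \<pi>) = 0" by (simp add: sum.cartesian_product)
      then show ?thesis using rhs by simp
    qed
  qed
  also have "\<dots> = (\<Sum>\<alpha>\<in>S. \<Sum>\<pi>\<in>P. \<Sum>m\<in>M. if m = restrict \<pi> {..<n} then c \<alpha> * of_int (sign \<pi>) * K m else 0)"
  proof -
    have "(if (\<forall>j<n. \<pi> j = m j) then c \<alpha> * of_int (sign \<pi>) * K m else 0)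
        = (if m = restrict \<pi> {..<n} then c \<alpha> * of_int (sign \<pi>) * K m else 0)" if "m \<in> M" for m \<alpha> \<pi>
    proof -
      have "(\<forall>j<n. \<pi> j = m j) \<longleftrightarrow> m = restrict \<pi> {..<n}"
        using that unfolding M_def by (auto simp: fun_eq_iff PiE_def extensional_def)
      then show ?thesis by simp
    qed
    then show ?thesis
      by (simp add: sum.swap[where A=M] cong: sum.cong)
  qed
  also have "\<dots> = (\<Sum>\<alpha>\<in>S. \<Sum>\<pi>\<in>P. c \<alpha> * of_int (sign \<pi>) * (\<Prod>j<n. k j ^ \<pi> j))"
  proof (intro sum.cong refl)
    fix \<alpha> \<pi> assume "\<pi> \<in> P"
    then have "restrict \<pi> {..<n} \<in> M" unfolding M_def using pn by auto
    then show "(\<Sum>m\<in>M. if m = restrict \<pi> {..<n} then c \<alpha> * of_int (sign \<pi>) * K m else 0) =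
         c \<alpha> * of_int (sign \<pi>) * (\<Prod>j<n. k j ^ \<pi> j)"
      using finM by (simp add: sum.delta' K_def)
  qed
  also have "\<dots> = (\<Sum>\<alpha>\<in>S. c \<alpha>) * DD n k"
    unfolding DD_def P_def[symmetric] by (simp add: sum_distrib_left sum_distrib_right mult_ac sum.swap[where A=P])
  finally show ?thesis unfolding S_def .
qed

lemma vdm_DD: "vdm n y = DD n y / (\<Prod>j<n. \<Prod>i<j. (of_nat j - of_nat i :: complex))"
  unfolding vdm_def vandermonde by (simp add: prod_dividef)

theorem lemma5:
  fixes n :: nat and c :: "(nat \<Rightarrow> nat) \<Rightarrow> complex"
  assumes "is_symmetric_poly n c"
  shows "shift_op c (vdm n) = (\<lambda>k. poly_eval c (\<lambda>_. 1) * vdm n k)"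
proof
  fix k
  define C where "C = (\<Prod>j<n. \<Prod>i<j. (of_nat j - of_nat i :: complex))"
  have "shift_op c (vdm n) k = (\<Sum>\<alpha>\<in>{\<alpha>. c \<alpha> \<noteq> 0}. c \<alpha> * DD n (\<lambda>i. k i + of_nat (\<alpha> i))) / C"
    unfolding shift_op_def vdm_DD C_def[symmetric] by (simp add: sum_divide_distrib)
  also have "\<dots> = (\<Sum>\<alpha>\<in>{\<alpha>. c \<alpha> \<noteq> 0}. c \<alpha>) * DD n k / C"
    by (simp add: main_sum[OF assms])
  also have "\<dots> = poly_eval c (\<lambda>_. 1) * vdm n k"
    unfolding poly_eval_def vdm_DD C_def[symmetric] by simp
  finally show "shift_op c (vdm n) k = poly_eval c (\<lambda>_. 1) * vdm n k" .
qed

end
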